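(* Let $A$ be an $m \times m$ normal centrosymmetric nonnegative matrix with eigenvalues $\alpha_1, \alpha_2, \ldots, \alpha_m$, where $\alpha_1$ is the Perron root of $A$, and let $u_1$ be a unit nonnegative eigenvector of $A$ corresponding to $\alpha_1$ with $Ju_1 = u_1$. Let $B$ be an $n \times n$ normal centrosymmetric nonnegative matrix with eigenvalues $\beta_1, \beta_2, \ldots, \beta_n$, where $\beta_1$ is the Perron root of $B$, and let $v_1$ be a unit nonnegative eigenvector of $B$ corresponding to $\beta_1$ with $Jv_1 = v_1$. Let $\rho, \xi \geq 0$ and let $\gamma_1, \gamma_2, \gamma_3$ be the eigenvalues of $$\widehat{C} = \begin{bmatrix} \beta_1 & \rho & \xi \\ \rho & \alpha_1 & \rho \\ \xi & \rho & \beta_1 \end{bmatrix}.$$ Then the matrix $$C = \begin{bmatrix} B & \rho v_1 u_1^T & \xi v_1 v_1^T \\ \rho u_1 v_1^T & A & J\rho u_1 v_1^T J \\ \xi v_1 v_1^T & \rho v_1 u_1^T & B \end{bmatrix}$$ is a normal centrosymmetric nonnegative matrix with eigenvalues $\gamma_1, \gamma_2, \gamma_3, \alpha_2, \ldots, \alpha_m, \beta_2, \ldots, \beta_n, \beta_2, \ldots, \beta_n$.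
   Context: $J$ denotes the reverse identity matrix (ones on the anti-diagonal, zeros elsewhere) of whatever size is appropriate where it appears (in $J\rho u_1 v_1^T J$, the left $J$ is $m \times m$ and the right $J$ is $n \times n$). A square matrix $Q$ is centrosymmetric if $JQJ = Q$, nonnegative if all entries are nonnegative, and normal if $QQ^* = Q^*Q$. The Perron root of a nonnegative matrix is its spectral radius, which is an eigenvalue. *)

theory Defs
  imports "Jordan_Normal_Form.Spectral_Radius" "Jordan_Normal_Form.Schur_Decomposition"
begin

definition exch_mat :: "nat \<Rightarrow> 'a :: {zero,one} mat" where
  "exch_mat k = mat k k (\<lambda>(i,j). if i + j = k - 1 then 1 else 0)"

definition centrosymmetric :: "'a :: comm_ring_1 mat \<Rightarrow> bool" where
  "centrosymmetric Q \<longleftrightarrow> square_mat Q \<and>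
     exch_mat (dim_row Q) * Q * exch_mat (dim_row Q) = Q"

definition nonneg_mat :: "real mat \<Rightarrow> bool" where
  "nonneg_mat Q \<longleftrightarrow> (\<forall>i < dim_row Q. \<forall>j < dim_col Q. Q $$ (i,j) \<ge> 0)"

definition nonneg_vec :: "real vec \<Rightarrow> bool" where
  "nonneg_vec v \<longleftrightarrow> (\<forall>i < dim_vec v. v $ i \<ge> 0)"

definition normal_mat :: "'a :: conjugatable_field mat \<Rightarrow> bool" where
  "normal_mat Q \<longleftrightarrow> square_mat Q \<and> Q * mat_adjoint Q = mat_adjoint Q * Q"

definition outer :: "'a :: times vec \<Rightarrow> 'a vec \<Rightarrow> 'a mat" where
  "outer x y = mat (dim_vec x) (dim_vec y) (\<lambda>(i,j). x $ i * y $ j)"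

definition block3 :: "'a mat \<Rightarrow> 'a mat \<Rightarrow> 'a mat \<Rightarrow> 'a mat \<Rightarrow> 'a mat \<Rightarrow> 'a mat \<Rightarrow>
    'a mat \<Rightarrow> 'a mat \<Rightarrow> 'a mat \<Rightarrow> 'a mat" where
  "block3 M11 M12 M13 M21 M22 M23 M31 M32 M33 =
    (let r1 = dim_row M11; r2 = dim_row M22; r3 = dim_row M33;
         c1 = dim_col M11; c2 = dim_col M22; c3 = dim_col M33
     in mat (r1 + r2 + r3) (c1 + c2 + c3) (\<lambda>(i,j).
        if i < r1 then
          (if j < c1 then M11 $$ (i,j) else if j < c1 + c2 then M12 $$ (i, j - c1)
           else M13 $$ (i, j - c1 - c2))
        else if i < r1 + r2 then
          (if j < c1 then M21 $$ (i - r1, j) else if j < c1 + c2 then M22 $$ (i - r1, j - c1)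
           else M23 $$ (i - r1, j - c1 - c2))
        else
          (if j < c1 then M31 $$ (i - r1 - r2, j) else if j < c1 + c2 then M32 $$ (i - r1 - r2, j - c1)
           else M33 $$ (i - r1 - r2, j - c1 - c2))))"

(* the complex eigenvalues of a real square matrix, listed with algebraic multiplicity *)
definition has_eigenvalues :: "real mat \<Rightarrow> complex list \<Rightarrow> bool" where
  "has_eigenvalues Q ls \<longleftrightarrow> length ls = dim_row Q \<and>
     char_poly (map_mat complex_of_real Q) = (\<Prod>a\<leftarrow>ls. [:- a, 1:])"

definition perron_root :: "real mat \<Rightarrow> real" where
  "perron_root Q = spectral_radius (map_mat complex_of_real Q)"

end

theory Submission
  imports Defs
begin


lemma sylvester_det:
  fixes A :: "'a::idom mat"
  assumes A: "A \<in> carrier_mat n k" and B: "B \<in> carrier_mat k n"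
  shows "z ^ k * det (z \<cdot>\<^sub>m 1\<^sub>m n - A * B) = z ^ n * det (z \<cdot>\<^sub>m 1\<^sub>m k - B * A)"
proof -
  define M where "M = four_block_mat (z \<cdot>\<^sub>m 1\<^sub>m n) A B (1\<^sub>m k)"
  define P where "P = four_block_mat (1\<^sub>m n) (0\<^sub>m n k) (- B) (z \<cdot>\<^sub>m 1\<^sub>m k)"
  define Q where "Q = four_block_mat (1\<^sub>m n) (0\<^sub>m n k) (- B) (1\<^sub>m k)"
  have M: "M \<in> carrier_mat (n+k) (n+k)" unfolding M_def using A B by auto
  have P: "P \<in> carrier_mat (n+k) (n+k)" unfolding P_def using A B by auto
  have Q: "Q \<in> carrier_mat (n+k) (n+k)" unfolding Q_def using A B by auto
  have BA: "B * A \<in> carrier_mat k k" using A B by auto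
  have AB: "A * B \<in> carrier_mat n n" using A B by auto
  have PM: "P * M = four_block_mat (z \<cdot>\<^sub>m 1\<^sub>m n) A (0\<^sub>m k n) (z \<cdot>\<^sub>m 1\<^sub>m k - B * A)"
    unfolding P_def M_def
    apply (subst mult_four_block_mat[OF one_carrier_mat zero_carrier_mat uminus_carrier_mat[OF B] smult_carrier_mat[OF one_carrier_mat]
        smult_carrier_mat[OF one_carrier_mat] A B one_carrier_mat])
    apply (rule cong_four_block_mat)
    using A B BA by auto
  have MQ: "M * Q = four_block_mat (z \<cdot>\<^sub>m 1\<^sub>m n - A * B) A (0\<^sub>m k n) (1\<^sub>m k)"
    unfolding Q_def M_def
    apply (subst mult_four_block_mat[OF smult_carrier_mat[OF one_carrier_mat] A B one_carrier_mat 
      one_carrier_mat zero_carrier_mat uminus_carrier_mat[OF B] one_carrier_mat])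
    apply (rule cong_four_block_mat)
    using A B AB by auto
  have dP: "det P = z ^ k" unfolding P_def
    by (subst det_four_block_mat_upper_right_zero[OF one_carrier_mat refl uminus_carrier_mat[OF B] smult_carrier_mat[OF one_carrier_mat]], simp)
  have dQ: "det Q = 1" unfolding Q_def
    by (subst det_four_block_mat_upper_right_zero[OF one_carrier_mat refl uminus_carrier_mat[OF B] one_carrier_mat], simp)
  have "det P * det M = z ^ n * det (z \<cdot>\<^sub>m 1\<^sub>m k - B * A)"
    unfolding det_mult[OF P M, symmetric] PM
    by (subst det_four_block_mat_lower_left_zero[OF smult_carrier_mat[OF one_carrier_mat] A refl minus_carrier_mat[OF BA]], simp)
  moreover have "det M * det Q = det (z \<cdot>\<^sub>m 1\<^sub>m n - A * B)"
    unfolding det_mult[OF M Q, symmetric] MQ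
    by (subst det_four_block_mat_lower_left_zero[OF minus_carrier_mat[OF AB] A refl one_carrier_mat], simp)
  ultimately show ?thesis using dP dQ by (simp add: mult.commute)
qed


lemma key_step:
  fixes D' W :: "'a::comm_ring_1 mat"
  assumes D': "D' \<in> carrier_mat N N" and W: "W \<in> carrier_mat N N" and DW: "D' * W = 0\<^sub>m N N"
  shows "(z \<cdot>\<^sub>m 1\<^sub>m N - D') * (z \<cdot>\<^sub>m 1\<^sub>m N - W) = z \<cdot>\<^sub>m (z \<cdot>\<^sub>m 1\<^sub>m N - (D' + W))"
proof -
  have c: "z \<cdot>\<^sub>m 1\<^sub>m N - D' \<in> carrier_mat N N" using D' by auto
  have "(z \<cdot>\<^sub>m 1\<^sub>m N - D') * (z \<cdot>\<^sub>m 1\<^sub>m N - W) = (z \<cdot>\<^sub>m 1\<^sub>m N - D') * (z \<cdot>\<^sub>m 1\<^sub>m N) - (z \<cdot>\<^sub>m 1\<^sub>m N - D') * W"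
    by (rule mult_minus_distrib_mat[OF c _ W], simp)
  also have "(z \<cdot>\<^sub>m 1\<^sub>m N - D') * (z \<cdot>\<^sub>m 1\<^sub>m N) = z \<cdot>\<^sub>m (z \<cdot>\<^sub>m 1\<^sub>m N - D')"
    using mult_smult_distrib[OF c one_carrier_mat] right_mult_one_mat[OF c] by simp
  also have "(z \<cdot>\<^sub>m 1\<^sub>m N - D') * W = z \<cdot>\<^sub>m W - D' * W"
    using minus_mult_distrib_mat[OF _ D' W] mult_smult_assoc_mat[OF one_carrier_mat W] W by simp
  also have "z \<cdot>\<^sub>m (z \<cdot>\<^sub>m 1\<^sub>m N - D') - (z \<cdot>\<^sub>m W - D' * W) = z \<cdot>\<^sub>m (z \<cdot>\<^sub>m 1\<^sub>m N - (D' + W))"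
    unfolding DW by (rule eq_matI, insert D' W, auto simp: algebra_simps)
  finally show ?thesis .
qed

lemma key_det:
  fixes D U L K :: "'a::idom mat"
  assumes D: "D \<in> carrier_mat N N" and U: "U \<in> carrier_mat N 3" and L: "L \<in> carrier_mat 3 3"
    and K: "K \<in> carrier_mat 3 3"
    and DU: "D * U = U * L" and UU: "transpose_mat U * U = 1\<^sub>m 3"
  shows "z ^ (N+3) * det (z \<cdot>\<^sub>m 1\<^sub>m N - (D + U * K * transpose_mat U)) * det (z \<cdot>\<^sub>m 1\<^sub>m 3 - L)
       = z ^ (N+3) * det (z \<cdot>\<^sub>m 1\<^sub>m N - D) * det (z \<cdot>\<^sub>m 1\<^sub>m 3 - (L + K))"
proof -
  define Ut where "Ut = transpose_mat U"
  have Ut: "Ut \<in> carrier_mat 3 N" using U unfolding Ut_def by auto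
  define D' where "D' = D - U * L * Ut"
  have D': "D' \<in> carrier_mat N N" unfolding D'_def using D U L Ut by auto
  have D'U: "D' * U = 0\<^sub>m N 3"
  proof -
    have "D' * U = D * U - U * L * Ut * U"
      unfolding D'_def by (rule minus_mult_distrib_mat[OF D _ U], insert U L Ut, auto)
    also have "U * L * Ut * U = U * L * (Ut * U)"
      using assoc_mult_mat[OF mult_carrier_mat[OF U L] Ut U] .
    also have "\<dots> = U * L" unfolding Ut_def UU using U L by simp
    finally show ?thesis unfolding DU using U L by simp
  qed
  have S: "z ^ 3 * (z ^ N * det (z \<cdot>\<^sub>m 1\<^sub>m N - (D' + U * X * Ut))) = det (z \<cdot>\<^sub>m 1\<^sub>m N - D') * (z ^ N * det (z \<cdot>\<^sub>m 1\<^sub>m 3 - X))"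
    if X: "X \<in> carrier_mat 3 3" for X
  proof -
    have W: "U * X * Ut \<in> carrier_mat N N" using U X Ut by auto
    have DW: "D' * (U * X * Ut) = 0\<^sub>m N N"
    proof -
      have "D' * (U * X * Ut) = D' * U * (X * Ut)"
        using assoc_mult_mat[OF D' U mult_carrier_mat[OF X Ut]] assoc_mult_mat[OF U X Ut] by simp
      thus ?thesis unfolding D'U using X Ut by auto
    qed
    have "det (z \<cdot>\<^sub>m 1\<^sub>m N - D') * det (z \<cdot>\<^sub>m 1\<^sub>m N - U * X * Ut) = z ^ N * det (z \<cdot>\<^sub>m 1\<^sub>m N - (D' + U * X * Ut))"
      unfolding det_mult[OF minus_carrier_mat[OF D'] minus_carrier_mat[OF W], symmetric, simplified] key_step[OF D' W DW]
      using D' W Ut by simp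
    moreover have "z ^ 3 * det (z \<cdot>\<^sub>m 1\<^sub>m N - U * X * Ut) = z ^ N * det (z \<cdot>\<^sub>m 1\<^sub>m 3 - X * Ut * U)"
      using sylvester_det[OF U mult_carrier_mat[OF X Ut], of z] assoc_mult_mat[OF U X Ut]
      by simp
    moreover have "X * Ut * U = X" using assoc_mult_mat[OF X Ut U] UU X unfolding Ut_def by simp
    ultimately show ?thesis by (metis mult.left_commute)
  qed
  have e1: "D' + U * (L + K) * Ut = D + U * K * Ut"
  proof -
    have "U * (L + K) * Ut = U * L * Ut + U * K * Ut"
      using mult_add_distrib_mat[OF U L K] add_mult_distrib_mat[OF mult_carrier_mat[OF U L] mult_carrier_mat[OF U K] Ut] by simp
    thus ?thesis unfolding D'_def by (intro eq_matI, insert D U L K Ut, auto)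
  qed
  have e2: "D' + U * L * Ut = D" unfolding D'_def by (intro eq_matI, insert D U L K Ut, auto)
  note s1 = S[OF add_carrier_mat[OF K, of L], unfolded e1]
  note s2 = S[OF L, unfolded e2]
  define dC where "dC = det (z \<cdot>\<^sub>m 1\<^sub>m N - (D + U * K * Ut))"
  define dD where "dD = det (z \<cdot>\<^sub>m 1\<^sub>m N - D)"
  define dL where "dL = det (z \<cdot>\<^sub>m 1\<^sub>m 3 - L)"
  define dLK where "dLK = det (z \<cdot>\<^sub>m 1\<^sub>m 3 - (L + K))"
  define a where "a = det (z \<cdot>\<^sub>m 1\<^sub>m N - D')"
  have s1': "z ^ 3 * (z ^ N * dC) = a * (z ^ N * dLK)" using s1 unfolding dC_def a_def dLK_def .
  have s2': "z ^ 3 * (z ^ N * dD) = a * (z ^ N * dL)" using s2 unfolding dD_def a_def dL_def .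
  have "z ^ (N+3) * dC * dL = (z ^ 3 * (z ^ N * dC)) * dL" by (simp add: power_add mult_ac)
  also have "\<dots> = (a * (z ^ N * dL)) * dLK" unfolding s1' by (simp add: mult_ac)
  also have "\<dots> = z ^ (N+3) * dD * dLK" unfolding s2'[symmetric] by (simp add: power_add mult_ac)
  finally show ?thesis unfolding dC_def dD_def dL_def dLK_def Ut_def .
qed


definition bd :: "'a::zero mat \<Rightarrow> 'a mat \<Rightarrow> 'a mat" where
  "bd X Y = four_block_mat X (0\<^sub>m (dim_row X) (dim_col Y)) (0\<^sub>m (dim_row Y) (dim_col X)) Y"

lemma bd_carrier[simp]: "X \<in> carrier_mat r1 c1 \<Longrightarrow> Y \<in> carrier_mat r2 c2 \<Longrightarrow> bd X Y \<in> carrier_mat (r1+r2) (c1+c2)"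
  unfolding bd_def by auto

lemma bd_dims[simp]: "dim_row (bd X Y) = dim_row X + dim_row Y" "dim_col (bd X Y) = dim_col X + dim_col Y"
  unfolding bd_def by auto

lemma bd_index: "i < dim_row X + dim_row Y \<Longrightarrow> j < dim_col X + dim_col Y \<Longrightarrow> bd X Y $$ (i,j) =
  (if i < dim_row X then if j < dim_col X then X $$ (i,j) else 0
   else if j < dim_col X then 0 else Y $$ (i - dim_row X, j - dim_col X))"
  unfolding bd_def by auto

lemma bd_alt: "X \<in> carrier_mat r1 c1 \<Longrightarrow> Y \<in> carrier_mat r2 c2 \<Longrightarrow>
  bd X Y = four_block_mat X (0\<^sub>m r1 c2) (0\<^sub>m r2 c1) Y"
  unfolding bd_def by auto

lemma sum_exch: assumes "i < r" shows "(\<Sum>t = 0..<r. (if i + t = r - Suc 0 then 1 else 0) * g t) = (g (r - Suc i) :: 'a::semiring_1)"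
proof -
  have "(\<Sum>t = 0..<r. (if i + t = r - Suc 0 then 1 else 0) * g t) = (\<Sum>t = 0..<r. (if t = r - Suc i then g t else 0))"
    by (rule sum.cong, insert assms, auto)
  thus ?thesis using assms by simp
qed

lemma sum_exch': assumes "j < c" shows "(\<Sum>t = 0..<c. g t * (if t + j = c - Suc 0 then 1 else 0)) = (g (c - Suc j) :: 'a::semiring_1)"
proof -
  have "(\<Sum>t = 0..<c. g t * (if t + j = c - Suc 0 then 1 else 0)) = (\<Sum>t = 0..<c. (if t = c - Suc j then g t else 0))"
    by (rule sum.cong, insert assms, auto)
  thus ?thesis using assms by simp
qed

lemma bd_mult: fixes X :: "'a::semiring_0 mat"
  assumes "X \<in> carrier_mat r1 k1" "Y \<in> carrier_mat r2 k2" "X' \<in> carrier_mat k1 c1" "Y' \<in> carrier_mat k2 c2"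
  shows "bd X Y * bd X' Y' = bd (X * X') (Y * Y')"
  unfolding bd_alt[OF assms(1,2)] bd_alt[OF assms(3,4)] bd_alt[OF mult_carrier_mat[OF assms(1,3)] mult_carrier_mat[OF assms(2,4)]]
  apply (subst mult_four_block_mat[OF assms(1) zero_carrier_mat zero_carrier_mat assms(2) assms(3) zero_carrier_mat zero_carrier_mat assms(4)])
  using assms by (intro cong_four_block_mat, auto)

lemma bd_transpose: "transpose_mat (bd X Y) = bd (transpose_mat X) (transpose_mat Y)"
  unfolding bd_def
  by (subst transpose_four_block_mat[OF carrier_matI[OF refl refl] zero_carrier_mat zero_carrier_mat carrier_matI[OF refl refl]], simp)

lemma bd_map: "map_mat f (bd X Y) = bd (map_mat f X) (map_mat f Y)" if "f 0 = 0"
  by (rule eq_matI, insert that, auto simp: bd_index)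

lemma cp_bd: fixes X :: "'a::idom mat"
  assumes X: "X \<in> carrier_mat a a" and Y: "Y \<in> carrier_mat b b"
  shows "char_poly (bd X Y) = char_poly X * char_poly Y"
proof -
  have "char_poly_matrix (bd X Y) = four_block_mat (char_poly_matrix X) (0\<^sub>m a b) (0\<^sub>m b a) (char_poly_matrix Y)"
    by (rule eq_matI, insert X Y, auto simp: char_poly_matrix_def bd_index)
  thus ?thesis unfolding char_poly_def
    using det_four_block_mat_lower_left_zero[OF char_poly_matrix_closed[OF X] zero_carrier_mat refl char_poly_matrix_closed[OF Y]]
    by simp
qed

definition sc :: "'a \<Rightarrow> 'a mat" where "sc x = mat 1 1 (\<lambda>_. x)"

lemma sc_carrier[simp]: "sc x \<in> carrier_mat 1 1" unfolding sc_def by auto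

lemma cp_sc: "char_poly (sc (x::'a::comm_ring_1)) = [:-x, 1:]"
  unfolding char_poly_def
  by (subst det_single[of _], auto simp: char_poly_matrix_def sc_def)

lemma cp_map: fixes X :: "'a::comm_ring_1 mat"
  assumes X: "X \<in> carrier_mat n n"
  shows "det ([:0,1:] \<cdot>\<^sub>m 1\<^sub>m n - map_mat (\<lambda>a. [:a:]) X) = char_poly X"
proof -
  have "[:0,1:] \<cdot>\<^sub>m 1\<^sub>m n - map_mat (\<lambda>a. [:a:]) X = char_poly_matrix X"
    by (rule eq_matI, insert X, auto simp: char_poly_matrix_def)
  thus ?thesis unfolding char_poly_def by simp
qed

lemma exch_left: fixes M :: "'a::comm_ring_1 mat"
  assumes M: "M \<in> carrier_mat r c" and i: "i < r" and j: "j < c"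
  shows "(exch_mat r * M) $$ (i,j) = M $$ (r-1-i, j)"
proof -
  have "(exch_mat r * M) $$ (i,j) = (\<Sum>t\<in>{0..<r}. (if t = r-1-i then M $$ (t,j) else 0))"
    using M i j unfolding exch_mat_def by (auto simp: scalar_prod_def sum_exch intro!: sum.cong)
  thus ?thesis using i by simp
qed

lemma exch_right: fixes M :: "'a::comm_ring_1 mat"
  assumes M: "M \<in> carrier_mat r c" and i: "i < r" and j: "j < c"
  shows "(M * exch_mat c) $$ (i,j) = M $$ (i, c-1-j)"
proof -
  have "(M * exch_mat c) $$ (i,j) = (\<Sum>t\<in>{0..<c}. (if t = c-1-j then M $$ (i,t) else 0))"
    using M i j unfolding exch_mat_def by (auto simp: scalar_prod_def sum_exch' intro!: sum.cong)
  thus ?thesis using j by simp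
qed

lemma exch_carrier[simp]: "exch_mat r \<in> carrier_mat r r" unfolding exch_mat_def by auto

lemma exch_both: fixes M :: "'a::comm_ring_1 mat"
  assumes M: "M \<in> carrier_mat r c" and i: "i < r" and j: "j < c"
  shows "(exch_mat r * M * exch_mat c) $$ (i,j) = M $$ (r-1-i, c-1-j)"
  using exch_right[OF mult_carrier_mat[OF exch_carrier M] i j] exch_left[OF M i] j by simp

lemma exch_vec: fixes u :: "'a::comm_ring_1 vec"
  assumes u: "u \<in> carrier_vec r" and i: "i < r"
  shows "(exch_mat r *\<^sub>v u) $ i = u $ (r-1-i)"
proof -
  have "(exch_mat r *\<^sub>v u) $ i = (\<Sum>t\<in>{0..<r}. (if t = r-1-i then u $ t else 0))"
    using u i unfolding exch_mat_def by (auto simp: scalar_prod_def sum_exch intro!: sum.cong)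
  thus ?thesis using i by simp
qed

lemma normal_eig:
  fixes A :: "real mat"
  assumes A: "A \<in> carrier_mat n n" and N: "A * transpose_mat A = transpose_mat A * A"
    and u: "u \<in> carrier_vec n" and Au: "A *\<^sub>v u = a \<cdot>\<^sub>v u"
  shows "transpose_mat A *\<^sub>v u = a \<cdot>\<^sub>v u"
proof -
  define y where "y = transpose_mat A *\<^sub>v u"
  have y: "y \<in> carrier_vec n" unfolding y_def using A u by auto
  have At: "transpose_mat A \<in> carrier_mat n n" using A by auto
  have Auc: "A *\<^sub>v u \<in> carrier_vec n" using A u by auto
  have yy: "y \<bullet> y = a * a * (u \<bullet> u)"
  proof -
    have "y \<bullet> y = u \<bullet> (A *\<^sub>v y)" unfolding y_def
      by (rule transpose_vec_mult_scalar[OF A _ u], insert At u, auto)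
    also have "A *\<^sub>v y = (A * transpose_mat A) *\<^sub>v u" unfolding y_def using A At u by simp
    also have "\<dots> = transpose_mat A *\<^sub>v (A *\<^sub>v u)" unfolding N using A At u by simp
    also have "u \<bullet> \<dots> = (A *\<^sub>v u) \<bullet> (A *\<^sub>v u)"
      using transpose_vec_mult_scalar[OF At Auc u] A by simp
    also have "\<dots> = a * a * (u \<bullet> u)" unfolding Au using u by simp
    finally show ?thesis .
  qed
  have yu: "y \<bullet> u = a * (u \<bullet> u)"
  proof -
    have "y \<bullet> u = u \<bullet> (A *\<^sub>v u)" unfolding y_def by (rule transpose_vec_mult_scalar[OF A u u])
    thus ?thesis unfolding Au using u by simp
  qed
  have uy: "u \<bullet> y = a * (u \<bullet> u)" using yu comm_scalar_prod[OF u y] by simp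
  define w where "w = y - a \<cdot>\<^sub>v u"
  have w: "w \<in> carrier_vec n" unfolding w_def using y u by auto
  have "w \<bullet> w = y \<bullet> y - a * (y \<bullet> u) - a * (u \<bullet> y) + a * a * (u \<bullet> u)"
    unfolding w_def using y u
    by (simp add: scalar_prod_def sum_subtractf sum.distrib sum_distrib_left algebra_simps)
  hence ww: "w \<bullet> w = 0" unfolding yy yu uy by simp
  have "\<forall>i \<in> {0..<n}. w $ i * w $ i = 0"
    using ww w unfolding scalar_prod_def
    by (subst sum_nonneg_eq_0_iff[symmetric], auto)
  hence w0: "\<And>i. i < n \<Longrightarrow> y $ i - a * u $ i = 0" unfolding w_def using y u by auto
  show ?thesis unfolding y_def[symmetric]
    by (intro eq_vecI, insert y u w0, auto)
qed



interpretation cpoly_hom: comm_ring_hom "\<lambda>x::'a::comm_ring_1. [:x:]"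
  by unfold_locales (auto simp: one_pCons)

interpretation ofrp: map_poly_comm_ring_hom "complex_of_real" ..

definition cv :: "'a vec \<Rightarrow> 'a mat" where "cv x = mat (dim_vec x) 1 (\<lambda>(i,_). x $ i)"

lemma cv_carrier[simp]: "x \<in> carrier_vec n \<Longrightarrow> cv x \<in> carrier_mat n 1" unfolding cv_def by auto
lemma cv_dims[simp]: "dim_row (cv x) = dim_vec x" "dim_col (cv x) = 1" unfolding cv_def by auto
lemma cv_index[simp]: "i < dim_vec x \<Longrightarrow> j < 1 \<Longrightarrow> cv x $$ (i,j) = x $ i" unfolding cv_def by auto

lemma col_cv[simp]: "col (cv x) 0 = x" unfolding cv_def by (intro eq_vecI, auto)

lemma cv_eig: fixes B :: "'a::comm_ring_1 mat"
  assumes B: "B \<in> carrier_mat n n" and v: "v \<in> carrier_vec n" and Bv: "B *\<^sub>v v = b \<cdot>\<^sub>v v"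
  shows "B * cv v = cv v * sc b"
proof (rule eq_matI)
  fix i j assume i: "i < dim_row (cv v * sc b)" and j: "j < dim_col (cv v * sc b)"
  hence j0: "j = 0" and i': "i < n" using v by (auto simp: sc_def)
  have "(B * cv v) $$ (i,j) = (B *\<^sub>v v) $ i" using B v i' j0 by simp
  also have "\<dots> = b * v $ i" unfolding Bv using v i' by simp
  also have "\<dots> = (cv v * sc b) $$ (i,j)" using v i' j0 by (simp add: scalar_prod_def sc_def)
  finally show "(B * cv v) $$ (i,j) = (cv v * sc b) $$ (i,j)" .
qed (insert B v, auto simp: sc_def)

lemma cv_norm: assumes v: "v \<in> carrier_vec n" and vv: "v \<bullet> v = (1::'a::comm_ring_1)"
  shows "transpose_mat (cv v) * cv v = 1\<^sub>m 1"
proof (rule eq_matI)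
  fix i j assume "i < dim_row (1\<^sub>m 1 :: 'a mat)" "j < dim_col (1\<^sub>m 1 :: 'a mat)"
  hence "i = 0" "j = 0" by auto
  thus "(transpose_mat (cv v) * cv v) $$ (i,j) = 1\<^sub>m 1 $$ (i,j)"
    using vv v by (simp add: row_transpose)
qed auto

lemma UKU_entry: fixes U K :: "'a::comm_ring_1 mat"
  assumes U: "U \<in> carrier_mat N 3" and K: "K \<in> carrier_mat 3 3"
    and Ue: "\<And>i k. i < N \<Longrightarrow> k < 3 \<Longrightarrow> U $$ (i,k) = (if k = f i then w i else 0)"
    and f: "\<And>i. i < N \<Longrightarrow> f i < 3"
    and i: "i < N" and j: "j < N"
  shows "(U * K * transpose_mat U) $$ (i,j) = w i * K $$ (f i, f j) * w j"
proof -
  have UK: "(U * K) $$ (i,l) = w i * K $$ (f i, l)" if l: "l < 3" for l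
  proof -
    have "(U * K) $$ (i,l) = (\<Sum>k = 0..<3. U $$ (i,k) * K $$ (k,l))"
      using U K i l by (simp add: scalar_prod_def)
    also have "\<dots> = (\<Sum>k = 0..<3. if k = f i then w i * K $$ (f i, l) else 0)"
      by (rule sum.cong, insert Ue i, auto)
    also have "\<dots> = w i * K $$ (f i, l)" using f[OF i] by simp
    finally show ?thesis .
  qed
  have "(U * K * transpose_mat U) $$ (i,j) = (\<Sum>l = 0..<3. (U * K) $$ (i,l) * U $$ (j,l))"
    using U K i j by (simp del: assoc_mult_mat add: scalar_prod_def)
  also have "\<dots> = (\<Sum>l = 0..<3. if l = f j then w i * K $$ (f i, f j) * w j else 0)"
    by (rule sum.cong, insert Ue j UK, auto)
  also have "\<dots> = w i * K $$ (f i, f j) * w j" using f[OF j] by simp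
  finally show ?thesis .
qed

lemma map_add_mat: "A \<in> carrier_mat r c \<Longrightarrow> B \<in> carrier_mat r c \<Longrightarrow>
   map_mat (\<lambda>x::'a::comm_ring_1. [:x:]) (A + B) = map_mat (\<lambda>x. [:x:]) A + map_mat (\<lambda>x. [:x:]) B"
  by (rule eq_matI, auto)



lemma adj_real: "mat_adjoint (C :: real mat) = transpose_mat C"
  unfolding mat_adjoint_def by (rule eq_matI, auto simp: mat_of_rows_index)

lemma lt3: "k < (3::nat) \<Longrightarrow> k = 0 \<or> k = 1 \<or> k = 2" by auto

theorem lemma3p5:
  fixes A B :: "real mat" and m n :: nat
    and \<alpha> :: "nat \<Rightarrow> complex" and \<beta> :: "nat \<Rightarrow> complex" and \<gamma> :: "nat \<Rightarrow> complex"
    and u v :: "real vec" and \<rho> \<xi> :: real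
  assumes A: "A \<in> carrier_mat m m" "m \<ge> 1"
    and A_props: "normal_mat A" "centrosymmetric A" "nonneg_mat A"
    and A_eig: "has_eigenvalues A (map \<alpha> [0..<m])"
    and A_perron: "\<alpha> 0 = complex_of_real (perron_root A)"
    and u: "u \<in> carrier_vec m" "u \<bullet> u = 1" "nonneg_vec u"
       "A *\<^sub>v u = perron_root A \<cdot>\<^sub>v u" "exch_mat m *\<^sub>v u = u"
    and B: "B \<in> carrier_mat n n" "n \<ge> 1"
    and B_props: "normal_mat B" "centrosymmetric B" "nonneg_mat B"
    and B_eig: "has_eigenvalues B (map \<beta> [0..<n])"
    and B_perron: "\<beta> 0 = complex_of_real (perron_root B)"
    and v: "v \<in> carrier_vec n" "v \<bullet> v = 1" "nonneg_vec v"
       "B *\<^sub>v v = perron_root B \<cdot>\<^sub>v v" "exch_mat n *\<^sub>v v = v"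
    and \<rho>\<xi>: "\<rho> \<ge> 0" "\<xi> \<ge> 0"
    and C_hat_eig: "has_eigenvalues
       (mat_of_rows_list 3
         [[perron_root B, \<rho>, \<xi>],
          [\<rho>, perron_root A, \<rho>],
          [\<xi>, \<rho>, perron_root B]])
       [\<gamma> 0, \<gamma> 1, \<gamma> 2]"
  defines "C \<equiv> block3
       B (\<rho> \<cdot>\<^sub>m outer v u) (\<xi> \<cdot>\<^sub>m outer v v)
       (\<rho> \<cdot>\<^sub>m outer u v) A (exch_mat m * (\<rho> \<cdot>\<^sub>m outer u v) * exch_mat n)
       (\<xi> \<cdot>\<^sub>m outer v v) (\<rho> \<cdot>\<^sub>m outer v u) B"
  shows "normal_mat C \<and> centrosymmetric C \<and> nonneg_mat C \<and>
    has_eigenvalues C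
      ([\<gamma> 0, \<gamma> 1, \<gamma> 2] @ map \<alpha> [1..<m] @ map \<beta> [1..<n] @ map \<beta> [1..<n])"
proof -
  define a where "a = perron_root A"
  define b where "b = perron_root B"
  define N where "N = n + m + n"
  define V where "V = cv v"
  define W where "W = cv u"
  define Dm where "Dm = bd (bd B A) B"
  define Um where "Um = bd (bd V W) V"
  define Lm where "Lm = bd (bd (sc b) (sc a)) (sc b)"
  define Km where "Km = mat_of_rows_list 3 [[0,\<rho>,\<xi>],[\<rho>,0,\<rho>],[\<xi>,\<rho>,(0::real)]]"
  define Ch where "Ch = mat_of_rows_list 3 [[b, \<rho>, \<xi>], [\<rho>, a, \<rho>], [\<xi>, \<rho>, b]]"
  define fi where "fi i = (if i < n then 0 else if i < n + m then 1 else (2::nat))" for i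
  define loc where "loc i = (if i < n then i else if i < n + m then i - n else i - n - m)" for i
  define sz where "sz k = (if k = (1::nat) then m else n)" for k
  define Bl where "Bl k = (if k = (1::nat) then A else B)" for k
  define vl where "vl k = (if k = (1::nat) then u else v)" for k
  define wi where "wi i = vl (fi i) $ loc i" for i
  have V: "V \<in> carrier_mat n 1" unfolding V_def using v by auto
  have W: "W \<in> carrier_mat m 1" unfolding W_def using u by auto
  have Dm: "Dm \<in> carrier_mat N N" unfolding Dm_def N_def using A B by auto
  have Um: "Um \<in> carrier_mat N 3" unfolding Um_def N_def using V W by (auto simp del: One_nat_def)
  have Lm: "Lm \<in> carrier_mat 3 3"
  proof -
    have "Lm \<in> carrier_mat (1+1+1) (1+1+1)" unfolding Lm_def by (intro bd_carrier sc_carrier)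
    moreover have "(1+1+1::nat) = 3" by simp
    ultimately show ?thesis by metis
  qed
  have Km: "Km \<in> carrier_mat 3 3" unfolding Km_def by (auto simp: mat_of_rows_list_def)
  have Ch: "Ch \<in> carrier_mat 3 3" unfolding Ch_def by (auto simp: mat_of_rows_list_def)
  have C: "C \<in> carrier_mat N N" unfolding C_def block3_def N_def using A B by auto
  have usym: "u $ (m-1-i) = u $ i" if "i < m" for i using exch_vec[OF u(1) that] u(5) by simp
  have vsym: "v $ (n-1-i) = v $ i" if "i < n" for i using exch_vec[OF v(1) that] v(5) by simp
  have Asym: "A $$ (m-1-i, m-1-j) = A $$ (i,j)" if "i < m" "j < m" for i j
    using exch_both[OF A(1) that] A_props(2) A(1) unfolding centrosymmetric_def by simp
  have Bsym: "B $$ (n-1-i, n-1-j) = B $$ (i,j)" if "i < n" "j < n" for i j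
    using exch_both[OF B(1) that] B_props(2) B(1) unfolding centrosymmetric_def by simp
  have fi_lt: "fi i < 3" for i unfolding fi_def by auto
  have loc_lt: "loc i < sz (fi i)" if "i < N" for i using that unfolding loc_def sz_def fi_def N_def by auto
  have fi_flip: "fi (N-1-i) = 2 - fi i" if "i < N" for i using that unfolding fi_def N_def by auto
  have loc_flip: "loc (N-1-i) = sz (fi i) - 1 - loc i" if "i < N" for i using that unfolding loc_def sz_def fi_def N_def by auto
  have sz2: "sz (2 - k) = sz k" "Bl (2 - k) = Bl k" "vl (2 - k) = vl k" if "k < 3" for k
    using that unfolding sz_def Bl_def vl_def by auto
  have Blsym: "Bl k $$ (sz k-1-p, sz k-1-q) = Bl k $$ (p,q)" if "p < sz k" "q < sz k" for k p q
    using that Asym Bsym unfolding Bl_def sz_def by auto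
  have vlsym: "vl k $ (sz k-1-p) = vl k $ p" if "p < sz k" for k p
    using that usym vsym unfolding vl_def sz_def by auto
  have Dm_entry: "Dm $$ (i,j) = (if fi i = fi j then Bl (fi i) $$ (loc i, loc j) else 0)" if "i < N" "j < N" for i j
    using that A B unfolding Dm_def N_def by (auto simp: bd_index fi_def loc_def Bl_def)
  have Um_entry: "Um $$ (i,k) = (if k = fi i then wi i else 0)" if "i < N" "k < 3" for i k
    using that A B u v unfolding Um_def N_def V_def W_def by (auto simp: bd_index fi_def loc_def wi_def vl_def)
  have N_entry: "(Um * Km * transpose_mat Um) $$ (i,j) = wi i * Km $$ (fi i, fi j) * wi j" if "i < N" "j < N" for i j
    by (rule UKU_entry[OF Um Km Um_entry fi_lt that])
  have E: "exch_mat m * (\<rho> \<cdot>\<^sub>m outer u v) * exch_mat n = \<rho> \<cdot>\<^sub>m outer u v"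
  proof -
    have c: "\<rho> \<cdot>\<^sub>m outer u v \<in> carrier_mat m n" using u v by (auto simp: outer_def)
    show ?thesis
    proof (rule eq_matI)
      fix i j assume ij: "i < dim_row (\<rho> \<cdot>\<^sub>m outer u v)" "j < dim_col (\<rho> \<cdot>\<^sub>m outer u v)"
      hence i: "i < m" and j: "j < n" using c by auto
      have "(exch_mat m * (\<rho> \<cdot>\<^sub>m outer u v) * exch_mat n) $$ (i,j) = (\<rho> \<cdot>\<^sub>m outer u v) $$ (m-1-i, n-1-j)"
        by (rule exch_both[OF c i j])
      also have "\<dots> = \<rho> * (u $ (m-1-i) * v $ (n-1-j))" using i j u v by (simp add: outer_def)
      also have "\<dots> = (\<rho> \<cdot>\<^sub>m outer u v) $$ (i,j)" using i j u v usym[OF i] vsym[OF j] by (simp add: outer_def)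
      finally show "(exch_mat m * (\<rho> \<cdot>\<^sub>m outer u v) * exch_mat n) $$ (i,j) = (\<rho> \<cdot>\<^sub>m outer u v) $$ (i,j)" .
    qed (insert u v, auto simp: outer_def exch_mat_def)
  qed
  have C_entry: "C $$ (i,j) = Dm $$ (i,j) + wi i * Km $$ (fi i, fi j) * wi j" if "i < N" "j < N" for i j
    unfolding Dm_entry[OF that] using that A B u v unfolding C_def E N_def
    by (auto simp: block3_def outer_def Km_def mat_of_rows_list_def wi_def vl_def fi_def loc_def Bl_def)
  have CDN: "C = Dm + Um * Km * transpose_mat Um"
  proof (rule eq_matI)
    fix i j assume "i < dim_row (Dm + Um * Km * transpose_mat Um)" "j < dim_col (Dm + Um * Km * transpose_mat Um)"
    hence ij: "i < N" "j < N" using Dm Um by auto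
    have "(Dm + Um * Km * transpose_mat Um) $$ (i,j) = Dm $$ (i,j) + (Um * Km * transpose_mat Um) $$ (i,j)"
      using ij Dm Um Km by (intro index_add_mat) auto
    thus "C $$ (i,j) = (Dm + Um * Km * transpose_mat Um) $$ (i,j)"
      unfolding C_entry[OF ij] N_entry[OF ij] by simp
  qed (insert C Dm Um, auto)
  have Km_entry: "Km $$ (p,q) = [[0,\<rho>,\<xi>],[\<rho>,0,\<rho>],[\<xi>,\<rho>,(0::real)]] ! p ! q" if "p < 3" "q < 3" for p q
    using that unfolding Km_def by (simp add: mat_of_rows_list_def)
  have wi_nn: "wi i \<ge> 0" if "i < N" for i
    using loc_lt[OF that] u(1,3) v(1,3) unfolding wi_def vl_def sz_def nonneg_vec_def by auto
  have Km_nn: "Km $$ (p,q) \<ge> 0" if "p < 3" "q < 3" for p q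
    unfolding Km_entry[OF that] using lt3[OF that(1)] lt3[OF that(2)] \<rho>\<xi> by auto
  have Dm_nn: "Dm $$ (i,j) \<ge> 0" if "i < N" "j < N" for i j
    unfolding Dm_entry[OF that] using loc_lt[OF that(1)] loc_lt[OF that(2)] A(1) B(1) A_props(3) B_props(3)
    unfolding Bl_def sz_def nonneg_mat_def by auto
  have nonneg: "nonneg_mat C"
    unfolding nonneg_mat_def using C C_entry wi_nn Km_nn Dm_nn fi_lt by auto
  have Km_flip: "Km $$ (2-p, 2-q) = Km $$ (p,q)" if "p < 3" "q < 3" for p q
  proof -
    have "2 - p < 3" "2 - q < 3" by auto
    from Km_entry[OF this] Km_entry[OF that] lt3[OF that(1)] lt3[OF that(2)] show ?thesis by auto
  qed
  have C_flip: "C $$ (N-1-i, N-1-j) = C $$ (i,j)" if i: "i < N" and j: "j < N" for i j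
  proof -
    have i': "N-1-i < N" and j': "N-1-j < N" using i j by auto
    have Dflip: "Dm $$ (N-1-i, N-1-j) = Dm $$ (i,j)"
    proof (cases "fi i = fi j")
      case True
      have "Dm $$ (N-1-i, N-1-j) = Bl (fi i) $$ (sz (fi i) - 1 - loc i, sz (fi i) - 1 - loc j)"
        unfolding Dm_entry[OF i' j'] fi_flip[OF i] fi_flip[OF j] loc_flip[OF i] loc_flip[OF j] True
        using sz2[OF fi_lt] by simp
      also have "\<dots> = Bl (fi i) $$ (loc i, loc j)" using Blsym loc_lt[OF i] loc_lt[OF j] True by simp
      finally show ?thesis unfolding Dm_entry[OF i j] using True by simp
    next
      case False
      hence "2 - fi i \<noteq> 2 - fi j" using fi_lt[of i] fi_lt[of j] by auto
      thus ?thesis unfolding Dm_entry[OF i' j'] Dm_entry[OF i j] fi_flip[OF i] fi_flip[OF j] using False by simp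
    qed
    have wflip: "wi (N-1-k) = wi k" if k: "k < N" for k
      unfolding wi_def fi_flip[OF k] loc_flip[OF k] sz2(3)[OF fi_lt] using vlsym[OF loc_lt[OF k]] by simp
    show ?thesis unfolding C_entry[OF i j] C_entry[OF i' j'] Dflip wflip[OF i] wflip[OF j]
      fi_flip[OF i] fi_flip[OF j] Km_flip[OF fi_lt fi_lt] ..
  qed
  have centro: "centrosymmetric C"
    unfolding centrosymmetric_def
  proof
    show "square_mat C" using C by auto
    have dC: "dim_row C = N" using C by auto
    show "exch_mat (dim_row C) * C * exch_mat (dim_row C) = C" unfolding dC
      by (rule eq_matI, insert C C_flip exch_both[OF C] carrier_matD[OF exch_carrier[of N]], auto)
  qed
  have AT: "A * transpose_mat A = transpose_mat A * A" using A_props(1) unfolding normal_mat_def adj_real by simp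
  have BT: "B * transpose_mat B = transpose_mat B * B" using B_props(1) unfolding normal_mat_def adj_real by simp
  have Au: "A *\<^sub>v u = a \<cdot>\<^sub>v u" using u(4) unfolding a_def .
  have Bv: "B *\<^sub>v v = b \<cdot>\<^sub>v v" using v(4) unfolding b_def .
  have ATu: "transpose_mat A *\<^sub>v u = a \<cdot>\<^sub>v u" by (rule normal_eig[OF A(1) AT u(1) Au])
  have BTv: "transpose_mat B *\<^sub>v v = b \<cdot>\<^sub>v v" by (rule normal_eig[OF B(1) BT v(1) Bv])
  have At: "transpose_mat A \<in> carrier_mat m m" and Bt: "transpose_mat B \<in> carrier_mat n n" using A B by auto
  have BA: "bd B A \<in> carrier_mat (n+m) (n+m)" using A B by auto
  have BAt: "bd (transpose_mat B) (transpose_mat A) \<in> carrier_mat (n+m) (n+m)" using At Bt by auto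
  have VW: "bd V W \<in> carrier_mat (n+m) (1+1)" using V W by auto
  have UL: "Um * Lm = bd (bd (V * sc b) (W * sc a)) (V * sc b)"
  proof -
    have SL: "bd (sc b) (sc a) \<in> carrier_mat (1+1) (1+1)" by (intro bd_carrier sc_carrier)
    show ?thesis unfolding Um_def Lm_def
      by (subst bd_mult[OF VW V SL sc_carrier], subst bd_mult[OF V W sc_carrier sc_carrier], rule refl)
  qed
  have BV: "B * V = V * sc b" unfolding V_def by (rule cv_eig[OF B(1) v(1) Bv])
  have AW: "A * W = W * sc a" unfolding W_def by (rule cv_eig[OF A(1) u(1) Au])
  have BtV: "transpose_mat B * V = V * sc b" unfolding V_def by (rule cv_eig[OF Bt v(1) BTv])
  have AtW: "transpose_mat A * W = W * sc a" unfolding W_def by (rule cv_eig[OF At u(1) ATu])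
  have DU: "Dm * Um = Um * Lm"
    unfolding UL unfolding Dm_def Um_def
    by (subst bd_mult[OF BA B(1) VW V], subst bd_mult[OF B(1) A(1) V W], unfold BV AW, rule refl)
  have DtU: "transpose_mat Dm * Um = Um * Lm"
    unfolding UL unfolding Dm_def Um_def bd_transpose
    by (subst bd_mult[OF BAt Bt VW V], subst bd_mult[OF Bt At V W], unfold BtV AtW, rule refl)
  have Dnorm: "Dm * transpose_mat Dm = transpose_mat Dm * Dm"
    unfolding Dm_def bd_transpose
    by (subst bd_mult[OF BA B(1) BAt Bt], subst bd_mult[OF BAt Bt BA B(1)], subst bd_mult[OF B(1) A(1) Bt At],
        subst bd_mult[OF Bt At B(1) A(1)], unfold AT BT, rule refl)
  define Nm where "Nm = Um * Km * transpose_mat Um"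
  have Nm: "Nm \<in> carrier_mat N N" unfolding Nm_def using Um Km by auto
  have Dt: "transpose_mat Dm \<in> carrier_mat N N" using Dm by auto
  have Nsym: "transpose_mat Nm = Nm"
  proof (rule eq_matI)
    fix i j assume "i < dim_row Nm" "j < dim_col Nm"
    hence ij: "i < N" "j < N" using Nm by auto
    have "Km $$ (fi j, fi i) = Km $$ (fi i, fi j)"
      using Km_entry[OF fi_lt fi_lt, of i j] Km_entry[OF fi_lt fi_lt, of j i] lt3[OF fi_lt[of i]] lt3[OF fi_lt[of j]] by auto
    moreover have "transpose_mat Nm $$ (i,j) = Nm $$ (j,i)" using ij Nm by simp
    ultimately show "transpose_mat Nm $$ (i,j) = Nm $$ (i,j)" unfolding Nm_def N_entry[OF ij] N_entry[OF ij(2,1)]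
      by simp
  qed (insert Nm, auto)
  have DN: "Dm * Nm = transpose_mat Dm * Nm"
  proof -
    have X: "Km * transpose_mat Um \<in> carrier_mat 3 N" using Km Um by auto
    have e: "Nm = Um * (Km * transpose_mat Um)" unfolding Nm_def using Um Km by simp
    show ?thesis unfolding e
      using assoc_mult_mat[OF Dm Um X] assoc_mult_mat[OF Dt Um X] DU DtU by simp
  qed
  have ND: "Nm * transpose_mat Dm = Nm * Dm"
  proof -
    have "transpose_mat (Dm * Nm) = transpose_mat (transpose_mat Dm * Nm)" unfolding DN ..
    thus ?thesis using transpose_mult[OF Dm Nm] transpose_mult[OF Dt Nm] Nsym by simp
  qed
  have CDN': "C = Dm + Nm" unfolding Nm_def by (rule CDN)
  have CT: "transpose_mat C = transpose_mat Dm + Nm" unfolding CDN' transpose_add[OF Dm Nm] Nsym ..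
  have normal: "normal_mat C"
    unfolding normal_mat_def adj_real
  proof
    show "square_mat C" using C by auto
    have "C * transpose_mat C = (Dm * transpose_mat Dm + Dm * Nm) + (Nm * transpose_mat Dm + Nm * Nm)"
      unfolding CT unfolding CDN'
      using add_mult_distrib_mat[OF Dm Nm add_carrier_mat[OF Nm, of "transpose_mat Dm"]] mult_add_distrib_mat[OF Dm Dt Nm] mult_add_distrib_mat[OF Nm Dt Nm]
      by simp
    also have "\<dots> = (transpose_mat Dm * Dm + transpose_mat Dm * Nm) + (Nm * Dm + Nm * Nm)"
      unfolding Dnorm DN ND ..
    also have "\<dots> = transpose_mat C * C"
      unfolding CT unfolding CDN'
      using add_mult_distrib_mat[OF Dt Nm add_carrier_mat[OF Nm, of Dm]] mult_add_distrib_mat[OF Dt Dm Nm] mult_add_distrib_mat[OF Nm Dm Nm]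
      by simp
    finally show "C * transpose_mat C = transpose_mat C * C" .
  qed
  define h where "h = map_mat (\<lambda>x::real. [:x:])"
  have UU: "transpose_mat Um * Um = 1\<^sub>m 3"
  proof -
    have VV: "transpose_mat V * V = 1\<^sub>m 1" unfolding V_def by (rule cv_norm[OF v(1,2)])
    have WW: "transpose_mat W * W = 1\<^sub>m 1" unfolding W_def by (rule cv_norm[OF u(1,2)])
    have Vt: "transpose_mat V \<in> carrier_mat 1 n" and Wt: "transpose_mat W \<in> carrier_mat 1 m" using V W by auto
    have VWt: "bd (transpose_mat V) (transpose_mat W) \<in> carrier_mat (1+1) (n+m)" using Vt Wt by auto
    have "transpose_mat Um * Um = bd (bd (1\<^sub>m 1) (1\<^sub>m 1)) (1\<^sub>m 1)"
      unfolding Um_def bd_transpose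
      by (subst bd_mult[OF VWt Vt VW V], subst bd_mult[OF Vt Wt V W], unfold VV WW, rule refl)
    also have "\<dots> = 1\<^sub>m 3" by (rule eq_matI, auto simp: bd_index)
    finally show ?thesis .
  qed
  have LK: "Lm + Km = Ch"
  proof (rule eq_matI)
    fix i j assume "i < dim_row Ch" "j < dim_col Ch"
    hence ij: "i < 3" "j < 3" using Ch by auto
    have "(Lm + Km) $$ (i,j) = Lm $$ (i,j) + Km $$ (i,j)" using ij Lm Km by simp
    also have "\<dots> = Ch $$ (i,j)" unfolding Km_entry[OF ij] using lt3[OF ij(1)] lt3[OF ij(2)]
      unfolding Lm_def Ch_def by (auto simp: bd_index mat_of_rows_list_def sc_def)
    finally show "(Lm + Km) $$ (i,j) = Ch $$ (i,j)" .
  qed (insert Ch Lm Km, auto)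
  have hDU: "h Dm * h Um = h Um * h Lm" unfolding h_def
    using cpoly_hom.mat_hom_mult[OF Dm Um] cpoly_hom.mat_hom_mult[OF Um Lm] DU by simp
  have hUU: "transpose_mat (h Um) * h Um = 1\<^sub>m 3" unfolding h_def map_mat_transpose
  proof -
    have Ut: "transpose_mat Um \<in> carrier_mat 3 N" using Um by auto
    have "map_mat (\<lambda>x::real. [:x:]) (transpose_mat Um) * map_mat (\<lambda>x. [:x:]) Um = map_mat (\<lambda>x. [:x:]) (transpose_mat Um * Um)"
      by (rule cpoly_hom.mat_hom_mult[OF Ut Um, symmetric])
    also have "\<dots> = 1\<^sub>m 3" unfolding UU by (rule cpoly_hom.mat_hom_one)
    finally show "map_mat (\<lambda>x::real. [:x:]) (transpose_mat Um) * map_mat (\<lambda>x. [:x:]) Um = 1\<^sub>m 3" .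
  qed
  have hD: "h Dm \<in> carrier_mat N N" and hU: "h Um \<in> carrier_mat N 3" and hL: "h Lm \<in> carrier_mat 3 3"
    and hK: "h Km \<in> carrier_mat 3 3" unfolding h_def using Dm Um Lm Km by auto
  note kd = key_det[OF hD hU hL hK hDU hUU, of "[:0,1:]"]
  have hC: "h Dm + h Um * h Km * transpose_mat (h Um) = h C"
  proof -
    have "h C = h Dm + h (Um * Km * transpose_mat Um)" unfolding CDN h_def
      by (rule map_add_mat[OF Dm], insert Um Km, auto)
    also have "h (Um * Km * transpose_mat Um) = h Um * h Km * transpose_mat (h Um)"
      unfolding h_def map_mat_transpose
      using cpoly_hom.mat_hom_mult[OF mult_carrier_mat[OF Um Km], of "transpose_mat Um"]
        cpoly_hom.mat_hom_mult[OF Um Km] Um by simp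
    finally show ?thesis by simp
  qed
  have hLK: "h Lm + h Km = h Ch" unfolding LK[symmetric] h_def by (rule map_add_mat[OF Lm Km, symmetric])
  have R: "[:0,1:] ^ (N+3) * char_poly C * char_poly Lm = [:0,1:] ^ (N+3) * char_poly Dm * char_poly Ch"
    using kd unfolding hC hLK unfolding h_def
    using cp_map[OF C] cp_map[OF Lm] cp_map[OF Dm] cp_map[OF Ch] by simp
  have cpL: "char_poly Lm = [:-b,1:] * [:-a,1:] * [:-b,1:]"
  proof -
    have SL: "bd (sc b) (sc a) \<in> carrier_mat (1+1) (1+1)" by (intro bd_carrier sc_carrier)
    show ?thesis unfolding Lm_def cp_bd[OF SL sc_carrier] cp_bd[OF sc_carrier sc_carrier] cp_sc ..
  qed
  have cpD: "char_poly Dm = char_poly B * char_poly A * char_poly B"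
    unfolding Dm_def cp_bd[OF BA B(1)] cp_bd[OF B(1) A(1)] ..
  define f where "f = (\<lambda>x::complex. [:-x, 1:])"
  define PA where "PA = prod_list (map f (map \<alpha> [1..<m]))"
  define PB where "PB = prod_list (map f (map \<beta> [1..<n]))"
  define PCh where "PCh = prod_list (map f [\<gamma> 0, \<gamma> 1, \<gamma> 2])"
  define PC where "PC = char_poly (map_mat complex_of_real C)"
  have m0: "[0..<m] = 0 # [1..<m]" using A(2) by (simp add: upt_conv_Cons)
  have n0: "[0..<n] = 0 # [1..<n]" using B(2) by (simp add: upt_conv_Cons)
  have cA: "map_poly complex_of_real (char_poly A) = [:-complex_of_real a, 1:] * PA"
    using A_eig unfolding has_eigenvalues_def of_real_hom.char_poly_hom[OF A(1)] m0 PA_def f_def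
    using A_perron unfolding a_def by simp
  have cB: "map_poly complex_of_real (char_poly B) = [:-complex_of_real b, 1:] * PB"
    using B_eig unfolding has_eigenvalues_def of_real_hom.char_poly_hom[OF B(1)] n0 PB_def f_def
    using B_perron unfolding b_def by simp
  have cCh: "map_poly complex_of_real (char_poly Ch) = PCh"
  proof -
    have "char_poly (map_mat complex_of_real Ch) = PCh"
      using C_hat_eig[unfolded has_eigenvalues_def, THEN conjunct2] unfolding Ch_def a_def b_def PCh_def f_def .
    thus ?thesis unfolding of_real_hom.char_poly_hom[OF Ch] .
  qed
  have cC: "map_poly complex_of_real (char_poly C) = PC"
    unfolding PC_def of_real_hom.char_poly_hom[OF C] ..
  define la where "la = [:-complex_of_real a, 1:]"
  define lb where "lb = [:-complex_of_real b, 1:]"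
  define q where "q = lb * la * lb"
  define Z where "Z = ([:0,1:] :: complex poly) ^ (N+3)"
  have Rc: "Z * PC * q = Z * (PB * PA * PB * PCh) * q"
  proof -
    have "map_poly complex_of_real ([:0,1:] ^ (N+3) * char_poly C * char_poly Lm)
       = map_poly complex_of_real ([:0,1:] ^ (N+3) * char_poly Dm * char_poly Ch)" unfolding R ..
    hence "Z * PC * (lb * la * lb) = Z * ((lb * PB) * (la * PA) * (lb * PB)) * PCh"
      unfolding ofrp.hom_mult ofrp.hom_power cC cpL cpD cA cB cCh Z_def la_def lb_def by simp
    thus ?thesis unfolding q_def by (simp add: ac_simps)
  qed
  have "la \<noteq> 0" "lb \<noteq> 0" unfolding la_def lb_def by auto
  hence "q \<noteq> 0" unfolding q_def by auto
  moreover have "Z \<noteq> 0" unfolding Z_def by auto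
  ultimately have "Z * q \<noteq> 0" by auto
  moreover have "(Z * q) * PC = (Z * q) * (PB * PA * PB * PCh)"
  proof -
    have "(Z * q) * PC = Z * PC * q" by (simp only: ac_simps)
    also have "\<dots> = Z * (PB * PA * PB * PCh) * q" by (rule Rc)
    also have "\<dots> = (Z * q) * (PB * PA * PB * PCh)" by (simp only: ac_simps)
    finally show ?thesis .
  qed
  ultimately have PCe: "PC = PB * PA * PB * PCh" by simp
  have eig: "has_eigenvalues C ([\<gamma> 0, \<gamma> 1, \<gamma> 2] @ map \<alpha> [1..<m] @ map \<beta> [1..<n] @ map \<beta> [1..<n])"
    unfolding has_eigenvalues_def
  proof
    show "length ([\<gamma> 0, \<gamma> 1, \<gamma> 2] @ map \<alpha> [1..<m] @ map \<beta> [1..<n] @ map \<beta> [1..<n]) = dim_row C"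
      using C A(2) B(2) unfolding N_def by auto
    show "char_poly (map_mat complex_of_real C) = (\<Prod>a\<leftarrow>[\<gamma> 0, \<gamma> 1, \<gamma> 2] @ map \<alpha> [1..<m] @ map \<beta> [1..<n] @ map \<beta> [1..<n]. [:- a, 1:])"
      unfolding PC_def[symmetric] PCe PA_def PB_def PCh_def f_def map_append prod_list.append by (simp only: ac_simps)
  qed
  show ?thesis using normal centro nonneg eig by auto
qed



end
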